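(* Suppose that for every $j\ge 0$ the map $F_j$ is nondecreasing in its first argument on $V^k$. Then for every $m\ge 0$, the maps $F_m$ and $F_{m+1}$ have the same fixed points.
   Context: Let $k\ge 2$ be an integer, $V\subseteq\mathbb{R}$ an interval, and $F_0:V^k\to V$ a map. Define maps $F_m:V^k\to V$ recursively by $$F_{m+1}(u_1,\dots,u_k)=F_m\big(F_0(u_1,\dots,u_k),u_1,\dots,u_{k-1}\big),\qquad m\ge 0.$$ A fixed point of $F_m$ is a point $x\in V$ with $F_m(x,\dots,x)=x$. *)

theory Defs
  imports "HOL-Analysis.Analysis"
begin

text \<open>Points of V^k are represented as real lists of length k.
  F_iter F0 m is the map F_m of the paper:
  F_(m+1)(u_1,...,u_k) = F_m(F_0(u_1,...,u_k), u_1, ..., u_(k-1)).\<close>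

fun F_iter :: "(real list \<Rightarrow> real) \<Rightarrow> nat \<Rightarrow> real list \<Rightarrow> real" where
  "F_iter F0 0 us = F0 us"
| "F_iter F0 (Suc m) us = F_iter F0 m (F0 us # butlast us)"

definition fixed_points :: "real set \<Rightarrow> nat \<Rightarrow> (real list \<Rightarrow> real) \<Rightarrow> nat \<Rightarrow> real set" where
  "fixed_points V k F0 m = {x \<in> V. F_iter F0 m (replicate k x) = x}"

end

theory Submission
  imports Defs
begin

theorem mainTheorem2:
  fixes k :: nat and V :: "real set" and F0 :: "real list \<Rightarrow> real"
  assumes "k \<ge> 2"
    and "is_interval V"
    and "\<And>us. length us = k \<Longrightarrow> set us \<subseteq> V \<Longrightarrow> F0 us \<in> V"
    and "\<And>j x y us. x \<in> V \<Longrightarrow> y \<in> V \<Longrightarrow> x \<le> y \<Longrightarrow>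
           length us = k - 1 \<Longrightarrow> set us \<subseteq> V \<Longrightarrow>
           F_iter F0 j (x # us) \<le> F_iter F0 j (y # us)"
  shows "\<forall>m. fixed_points V k F0 m = fixed_points V k F0 (Suc m)"
proof -
  have rep: "replicate k x = x # replicate (k-1) x" for x :: real
    using assms(1) by (cases k) auto
  have bl: "butlast (replicate k x) = replicate (k-1) x" for x :: real
    by (induction k) (auto simp: butlast.simps gr0_conv_Suc)
  have step: "F_iter F0 (Suc j) (replicate k x) = F_iter F0 j (F0 (replicate k x) # replicate (k-1) x)"
    for j x by (simp add: bl)
  have fix0: "F_iter F0 j (replicate k x) = x" if "F0 (replicate k x) = x" for j x
  proof (induction j)
    case 0 then show ?case using that by simp
  next
    case (Suc j) then show ?case using that by (metis step rep)
  qed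
  have up: "F_iter F0 j (replicate k x) \<ge> F0 (replicate k x)"
    if "x \<in> V" "F0 (replicate k x) \<ge> x" for j x
  proof (induction j)
    case 0 then show ?case by simp
  next
    case (Suc j)
    have yV: "F0 (replicate k x) \<in> V" using assms(3)[of "replicate k x"] that(1) assms(1) by auto
    have "F_iter F0 j (x # replicate (k-1) x) \<le> F_iter F0 j (F0 (replicate k x) # replicate (k-1) x)"
      using assms(4)[of x "F0 (replicate k x)" "replicate (k-1) x" j] that yV assms(1)
      by auto
    moreover have "F_iter F0 (Suc j) (replicate k x) = F_iter F0 j (F0 (replicate k x) # replicate (k-1) x)" by (rule step)
    moreover have "F_iter F0 j (x # replicate (k-1) x) = F_iter F0 j (replicate k x)" using rep[of x] by simp
    ultimately show ?case using Suc by linarith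
  qed
  have down: "F_iter F0 j (replicate k x) \<le> F0 (replicate k x)"
    if "x \<in> V" "F0 (replicate k x) \<le> x" for j x
  proof (induction j)
    case 0 then show ?case by simp
  next
    case (Suc j)
    have yV: "F0 (replicate k x) \<in> V" using assms(3)[of "replicate k x"] that(1) assms(1) by auto
    have "F_iter F0 j (x # replicate (k-1) x) \<ge> F_iter F0 j (F0 (replicate k x) # replicate (k-1) x)"
      using assms(4)[of "F0 (replicate k x)" x "replicate (k-1) x" j] that yV assms(1)
      by auto
    moreover have "F_iter F0 (Suc j) (replicate k x) = F_iter F0 j (F0 (replicate k x) # replicate (k-1) x)" by (rule step)
    moreover have "F_iter F0 j (x # replicate (k-1) x) = F_iter F0 j (replicate k x)" using rep[of x] by simp
    ultimately show ?case using Suc by linarith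
  qed
  have key: "x \<in> fixed_points V k F0 j \<longleftrightarrow> x \<in> V \<and> F0 (replicate k x) = x" for j x
  proof
    assume h: "x \<in> fixed_points V k F0 j"
    hence xV: "x \<in> V" and e: "F_iter F0 j (replicate k x) = x" by (auto simp: fixed_points_def)
    have "F0 (replicate k x) = x"
    proof (rule ccontr)
      assume ne: "F0 (replicate k x) \<noteq> x"
      show False
      proof (cases "F0 (replicate k x) > x")
        case True then show False using up[OF xV, of j] e by simp
      next
        case False then show False using down[OF xV, of j] e ne by simp
      qed
    qed
    thus "x \<in> V \<and> F0 (replicate k x) = x" using xV by simp
  next
    assume "x \<in> V \<and> F0 (replicate k x) = x"
    thus "x \<in> fixed_points V k F0 j" using fix0 by (simp add: fixed_points_def)
  qed
  show ?thesis using key by blast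
qed

end
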